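(* Let $R$, $G$, $*$, $\sigma$ and $\mathcal{S}$ be as in the context, and suppose $\mathcal{S}$ is anticommutative. Then: - for all $x,y\in G$, we have $xy=yx$ if and only if $x^*y=yx^*$; - if moreover $x,y\in G\setminus G_*$ and $xy=yx$, then $xy=yx=x^*y^*=y^*x^*$ and $xy^*=y^*x=x^*y=yx^*$, and $2(1+\sigma(xy))=0=2(\sigma(x)+\sigma(y))$ in $R$.
   Context: Throughout, $R$ is a commutative ring with unity with $\operatorname{char}(R)\neq 2$, and $\mathcal{U}(R)$ is its unit group. $G$ is a group with an involution $*$, i.e. a map $x\mapsto x^*$ with $(xy)^*=y^*x^*$ and $(x^* )^*=x$. The map $\sigma:G\to\mathcal{U}(R)$ is a nontrivial group homomorphism with kernel $N=\ker\sigma$, and it is compatible with $*$: $xx^*\in N$ for all $x\in G$. The group ring $RG$ carries the involution $\left(\sum_{x\in G}\alpha_x x\right)^{\sigma*}=\sum_{x\in G}\sigma(x)\alpha_x x^*$. Write $G_*=\{x\in G: x^*=x\}$ and $N_*=G_*\cap N$. Let $\mathcal{S}$ be the $R$-submodule of $RG$ spanned by the union of the following three sets: - $2\mathcal{S}_1=\{2x: x\in N_*\}$; - $\mathcal{S}_2=\{\alpha x: x\in G_*\setminus N,\ \alpha\in R,\ \alpha(1-\sigma(x))=0\}$; - $\mathcal{S}_3=\{x+\sigma(x)x^*: x\in G\setminus G_*\}$. $\mathcal{S}$ is called anticommutative if $ab+ba=0$ for all $a,b\in\mathcal{S}$. *)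

theory Defs
  imports "HOL-Algebra.Group"
begin

text \<open>The group ring RG is modelled as functions G \<Rightarrow> R (finitely supported on carrier G
for the elements that occur). gdelta x is the basis element x of RG.\<close>

definition gdelta :: "'g \<Rightarrow> 'g \<Rightarrow> 'r::comm_ring_1" where
  "gdelta x = (\<lambda>z. if z = x then 1 else 0)"

definition gr_mult :: "('g, 'b) monoid_scheme \<Rightarrow> ('g \<Rightarrow> 'r::comm_ring_1) \<Rightarrow> ('g \<Rightarrow> 'r) \<Rightarrow> 'g \<Rightarrow> 'r" where
  "gr_mult G f h = (\<lambda>z. \<Sum>x\<in>{x\<in>carrier G. f x \<noteq> 0}. f x * h (inv\<^bsub>G\<^esub> x \<otimes>\<^bsub>G\<^esub> z))"

text \<open>The R-submodule S of RG spanned by 2S_1, S_2 and S_3.\<close>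
inductive_set S_span :: "('g, 'b) monoid_scheme \<Rightarrow> ('g \<Rightarrow> 'g) \<Rightarrow> ('g \<Rightarrow> 'r::comm_ring_1)
    \<Rightarrow> ('g \<Rightarrow> 'r) set"
  for G star \<sigma> where
  zero: "(\<lambda>_. 0) \<in> S_span G star \<sigma>"
| gen1: "\<lbrakk>x \<in> carrier G; star x = x; \<sigma> x = 1\<rbrakk>
          \<Longrightarrow> (\<lambda>z. 2 * gdelta x z) \<in> S_span G star \<sigma>"
| gen2: "\<lbrakk>x \<in> carrier G; star x = x; \<sigma> x \<noteq> 1; \<alpha> * (1 - \<sigma> x) = 0\<rbrakk>
          \<Longrightarrow> (\<lambda>z. \<alpha> * gdelta x z) \<in> S_span G star \<sigma>"
| gen3: "\<lbrakk>x \<in> carrier G; star x \<noteq> x\<rbrakk>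
          \<Longrightarrow> (\<lambda>z. gdelta x z + \<sigma> x * gdelta (star x) z) \<in> S_span G star \<sigma>"
| add: "\<lbrakk>a \<in> S_span G star \<sigma>; b \<in> S_span G star \<sigma>\<rbrakk>
          \<Longrightarrow> (\<lambda>z. a z + b z) \<in> S_span G star \<sigma>"
| smult: "a \<in> S_span G star \<sigma> \<Longrightarrow> (\<lambda>z. c * a z) \<in> S_span G star \<sigma>"

definition S_anticomm :: "('g, 'b) monoid_scheme \<Rightarrow> ('g \<Rightarrow> 'g) \<Rightarrow> ('g \<Rightarrow> 'r::comm_ring_1) \<Rightarrow> bool" where
  "S_anticomm G star \<sigma> \<longleftrightarrow>
     (\<forall>a\<in>S_span G star \<sigma>. \<forall>b\<in>S_span G star \<sigma>.
        (\<lambda>z. gr_mult G a b z + gr_mult G b a z) = (\<lambda>_. 0))"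

end

theory Submission
  imports Defs
begin

locale L = group G for G :: "'g monoid" (structure) +
  fixes star :: "'g \<Rightarrow> 'g" and \<sigma> :: "'g \<Rightarrow> 'r::comm_ring_1"
  assumes char: "(2::'r) \<noteq> 0"
    and star_closed: "x \<in> carrier G \<Longrightarrow> star x \<in> carrier G"
    and star_mult: "x \<in> carrier G \<Longrightarrow> y \<in> carrier G \<Longrightarrow> star (x \<otimes>\<^bsub>G\<^esub> y) = star y \<otimes>\<^bsub>G\<^esub> star x"
    and star_star: "x \<in> carrier G \<Longrightarrow> star (star x) = x"
    and sigma_unit: "x \<in> carrier G \<Longrightarrow> \<sigma> x dvd 1"
    and anti: "S_anticomm G star \<sigma>"
begin

definition A :: "'g \<Rightarrow> 'g \<Rightarrow> 'r" where
  "A x = (\<lambda>z. gdelta x z + \<sigma> x * gdelta (star x) z)"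

lemma A_in: "x \<in> carrier G \<Longrightarrow> star x \<noteq> x \<Longrightarrow> A x \<in> S_span G star \<sigma>"
  unfolding A_def by (rule S_span.gen3)

lemma unit2: "x \<in> carrier G \<Longrightarrow> 2 * \<sigma> x \<noteq> 0"
proof
  assume x: "x \<in> carrier G" and h: "2 * \<sigma> x = 0"
  from sigma_unit[OF x] obtain w where "1 = \<sigma> x * w" by (auto elim: dvdE)
  then have "(2::'r) = 2 * \<sigma> x * w" by (simp add: mult.assoc)
  with h char show False by simp
qed

lemma unit1: "x \<in> carrier G \<Longrightarrow> \<sigma> x \<noteq> 0"
  using unit2 by force

lemma gr_mult_A:
  assumes x: "x \<in> carrier G" and nx: "star x \<noteq> x"
  shows "gr_mult G (A x) h z = h (inv x \<otimes> z) + \<sigma> x * h (inv (star x) \<otimes> z)"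
proof -
  have sx: "star x \<in> carrier G" using star_closed[OF x] .
  have nx': "x \<noteq> star x" using nx by auto
  let ?S = "{w \<in> carrier G. A x w \<noteq> 0}"
  let ?g = "\<lambda>w. A x w * h (inv w \<otimes> z)"
  have sub: "?S \<subseteq> {x, star x}" by (auto simp: A_def gdelta_def)
  have "sum ?g ?S = sum ?g {x, star x}"
    apply (rule sum.mono_neutral_left) using sub x sx by auto
  also have "\<dots> = ?g x + ?g (star x)" using nx by simp
  also have "\<dots> = h (inv x \<otimes> z) + \<sigma> x * h (inv (star x) \<otimes> z)"
    using nx nx' by (simp add: A_def gdelta_def)
  finally show ?thesis by (simp add: gr_mult_def)
qed

lemma anti_eq:
  assumes x: "x \<in> carrier G" and y: "y \<in> carrier G" and nx: "star x \<noteq> x"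
    and ny: "star y \<noteq> y" and z: "z \<in> carrier G"
  shows "(if z = x \<otimes> y then 1 else 0) + \<sigma> y * (if z = x \<otimes> star y then 1 else 0)
       + \<sigma> x * (if z = star x \<otimes> y then 1 else 0) + \<sigma> x * \<sigma> y * (if z = star x \<otimes> star y then 1 else 0)
       + (if z = y \<otimes> x then 1 else 0) + \<sigma> x * (if z = y \<otimes> star x then 1 else 0)
       + \<sigma> y * (if z = star y \<otimes> x then 1 else 0) + \<sigma> x * \<sigma> y * (if z = star y \<otimes> star x then 1 else 0) = (0::'r)"
proof -
  have sx: "star x \<in> carrier G" using star_closed[OF x] .
  have sy: "star y \<in> carrier G" using star_closed[OF y] .
  have "(\<lambda>z. gr_mult G (A x) (A y) z + gr_mult G (A y) (A x) z) = (\<lambda>_. 0)"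
    using anti A_in[OF x nx] A_in[OF y ny] unfolding S_anticomm_def by blast
  then have "gr_mult G (A x) (A y) z + gr_mult G (A y) (A x) z = 0" by (metis)
  moreover have "\<And>a. a \<in> carrier G \<Longrightarrow> star a \<noteq> a \<Longrightarrow> b \<in> carrier G \<Longrightarrow>
      A a (inv b \<otimes> z) = (if z = b \<otimes> a then 1 else 0) + \<sigma> a * (if z = b \<otimes> star a then 1 else 0)"
    for b using z star_closed by (simp add: A_def gdelta_def inv_solve_left' split del: if_split)
  ultimately show ?thesis
    using x y z sx sy nx ny by (simp add: gr_mult_A[OF x nx] gr_mult_A[OF y ny] distrib_left mult.assoc add.assoc mult.left_commute split del: if_split)
qed

lemma two_ne: "(1::'r) + 1 \<noteq> 0"
  using char by (metis one_add_one)

lemma step1: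
  assumes x: "x \<in> carrier G" and y: "y \<in> carrier G" and nx: "star x \<noteq> x"
    and ny: "star y \<noteq> y" and xy: "x \<otimes> y = y \<otimes> x"
  shows "x \<otimes> y = star x \<otimes> star y \<and> star y \<otimes> star x = star x \<otimes> star y
     \<and> 2 * (1 + \<sigma> x * \<sigma> y) = 0"
proof -
  have sx: "star x \<in> carrier G" using star_closed[OF x] .
  have sy: "star y \<in> carrier G" using star_closed[OF y] .
  have nx': "x \<noteq> star x" and ny': "y \<noteq> star y" using nx ny by auto
  have e: "star y \<otimes> star x = star x \<otimes> star y"
    using star_mult[OF x y] star_mult[OF y x] xy by simp
  have F6: "x \<otimes> y \<noteq> y \<otimes> star x" using xy nx' x y sx by simp
  have F7: "x \<otimes> y \<noteq> star y \<otimes> x" using xy ny' x y sy by simp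
  have F2: "x \<otimes> y \<noteq> x \<otimes> star y" using ny' x y sy by simp
  have F3: "x \<otimes> y \<noteq> star x \<otimes> y" using nx' x y sx by simp
  have E: "(if x \<otimes> y = x \<otimes> y then 1 else 0) + \<sigma> y * (if x \<otimes> y = x \<otimes> star y then 1 else 0)
       + \<sigma> x * (if x \<otimes> y = star x \<otimes> y then 1 else 0) + \<sigma> x * \<sigma> y * (if x \<otimes> y = star x \<otimes> star y then 1 else 0)
       + (if x \<otimes> y = y \<otimes> x then 1 else 0) + \<sigma> x * (if x \<otimes> y = y \<otimes> star x then 1 else 0)
       + \<sigma> y * (if x \<otimes> y = star y \<otimes> x then 1 else 0) + \<sigma> x * \<sigma> y * (if x \<otimes> y = star y \<otimes> star x then 1 else 0) = (0::'r)"
    by (rule anti_eq[OF x y nx ny m_closed[OF x y]])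
  have P: "x \<otimes> y = star x \<otimes> star y"
  proof (rule ccontr)
    assume np: "x \<otimes> y \<noteq> star x \<otimes> star y"
    from E have "(1::'r) + 1 = 0" using np F2 F3 F6 F7 xy[symmetric] e x y sx sy nx' ny' by (simp split del: if_split)
    with two_ne show False by simp
  qed
  from E have "(1::'r) + 1 + 2 * (\<sigma> x * \<sigma> y) = 0" using P F2 F3 F6 F7 xy[symmetric] e x y sx sy nx' ny' by (simp add: algebra_simps split del: if_split)
  then have "2 * (1 + \<sigma> x * \<sigma> y) = 0" by (simp add: algebra_simps one_add_one)
  with P e show ?thesis by simp
qed

lemma step2:
  assumes x: "x \<in> carrier G" and nx: "star x \<noteq> x"
  shows "x \<otimes> star x = star x \<otimes> x"
proof (rule ccontr)
  assume np: "x \<otimes> star x \<noteq> star x \<otimes> x"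
  have sx: "star x \<in> carrier G" using star_closed[OF x] .
  have nx': "x \<noteq> star x" using nx by auto
  have F1: "x \<otimes> star x \<noteq> x \<otimes> x" using nx x sx by simp
  have F4: "x \<otimes> star x \<noteq> star x \<otimes> star x" using nx' x sx by simp
  note E = anti_eq[OF x x nx nx m_closed[OF x sx]]
  from E have "\<sigma> x + \<sigma> x = 0" using F1 F4 np
    by (simp split del: if_split)
  then have "2 * \<sigma> x = 0" by (metis mult_2)
  with unit2[OF x] show False by simp
qed

lemma step3:
  assumes x: "x \<in> carrier G" and y: "y \<in> carrier G" and nx: "star x \<noteq> x"
    and ny: "star y \<noteq> y" and xy: "x \<otimes> y = y \<otimes> x"
  shows "y \<otimes> x = star x \<otimes> star y
               \<and> star x \<otimes> star y = star y \<otimes> star x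
               \<and> x \<otimes> star y = star y \<otimes> x
               \<and> star y \<otimes> x = star x \<otimes> y
               \<and> star x \<otimes> y = y \<otimes> star x
               \<and> 2 * (1 + \<sigma> x * \<sigma> y) = 0
               \<and> 2 * (\<sigma> x + \<sigma> y) = 0"
proof -
  have sx: "star x \<in> carrier G" using star_closed[OF x] .
  have sy: "star y \<in> carrier G" using star_closed[OF y] .
  have nx': "x \<noteq> star x" and ny': "y \<noteq> star y" using nx ny by auto
  from step1[OF x y nx ny xy] have P1: "x \<otimes> y = star x \<otimes> star y"
    and e: "star y \<otimes> star x = star x \<otimes> star y" and c1: "2 * (1 + \<sigma> x * \<sigma> y) = 0" by auto
  from step1[OF x x nx nx refl] have xx: "x \<otimes> x = star x \<otimes> star x" by auto
  have cx: "x \<otimes> star x = star x \<otimes> x" using step2[OF x nx] .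
  have "star x \<otimes> (x \<otimes> star y) = (star x \<otimes> x) \<otimes> star y" using x sx sy by (simp add: m_assoc)
  also have "\<dots> = x \<otimes> (star x \<otimes> star y)" using x sx sy cx by (simp add: m_assoc[symmetric])
  also have "\<dots> = (x \<otimes> x) \<otimes> y" using x y P1 by (simp add: m_assoc)
  also have "\<dots> = star x \<otimes> (star x \<otimes> y)" using x y sx xx by (simp add: m_assoc[symmetric])
  finally have e1: "x \<otimes> star y = star x \<otimes> y" using x y sx sy by simp
  have "(star y \<otimes> x) \<otimes> star x = star y \<otimes> (star x \<otimes> x)" using x sx sy cx by (simp add: m_assoc)
  also have "\<dots> = (x \<otimes> y) \<otimes> x" using x sx sy y P1 e by (simp add: m_assoc[symmetric])
  also have "\<dots> = x \<otimes> (x \<otimes> y)" using x y xy by (metis m_assoc)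
  also have "\<dots> = (x \<otimes> star y) \<otimes> star x" using x y sx sy P1 e by (simp add: m_assoc)
  finally have e3: "star y \<otimes> x = x \<otimes> star y" using x y sx sy by simp
  have Fa: "x \<otimes> star y \<noteq> x \<otimes> y" using x y sy ny by simp
  have Fb: "y \<otimes> star x \<noteq> x \<otimes> y" using x y sx nx xy by simp
  have R1: "star x \<otimes> y = x \<otimes> star y" using e1 by simp
  have R2: "star y \<otimes> star x = x \<otimes> y" using e P1 by simp
  have R3: "star x \<otimes> star y = x \<otimes> y" using P1 by simp
  note E1 = anti_eq[OF x y nx ny m_closed[OF x sy]]
  note E2 = anti_eq[OF x y nx ny m_closed[OF y sx]]
  have e2: "x \<otimes> star y = y \<otimes> star x"
  proof (rule ccontr)
    assume n2: "x \<otimes> star y \<noteq> y \<otimes> star x"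
    from E2 have "\<sigma> x = 0" using n2 Fa Fb R1 R2 R3 e3 xy[symmetric] x y sx sy nx' ny'
      by (simp split del: if_split)
    with unit1[OF x] show False by simp
  qed
  from E1 have "\<sigma> y + \<sigma> x + \<sigma> x + \<sigma> y = 0"
    using e2 Fa Fb R1 R2 R3 e3 xy[symmetric] x y sx sy nx' ny'
    by (simp split del: if_split)
  then have c2: "2 * (\<sigma> x + \<sigma> y) = 0" by (simp add: algebra_simps mult_2)
  show ?thesis using c1 c2 e1 e2 e3 P1 e xy by simp
qed

lemma fwd:
  assumes x: "x \<in> carrier G" and y: "y \<in> carrier G" and xy: "x \<otimes> y = y \<otimes> x"
  shows "star x \<otimes> y = y \<otimes> star x"
proof (cases "star x = x")
  case True then show ?thesis using xy by simp
next
  case nx: False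
  have sx: "star x \<in> carrier G" using star_closed[OF x] .
  show ?thesis
  proof (cases "star y = y")
    case False
    then show ?thesis using step3[OF x y nx False xy] by simp
  next
    case sy: True
    let ?z = "x \<otimes> y"
    have z: "?z \<in> carrier G" using x y by simp
    have sz: "star ?z = y \<otimes> star x" using star_mult[OF x y] sy by simp
    have nz: "star ?z \<noteq> ?z"
    proof
      assume "star ?z = ?z"
      then have "y \<otimes> star x = y \<otimes> x" using sz xy by simp
      then show False using nx x y sx by simp
    qed
    have xz: "x \<otimes> ?z = ?z \<otimes> x" using x y xy by (metis m_assoc)
    have h: "star x \<otimes> ?z = ?z \<otimes> star x" using step3[OF x z nx nz xz] by simp
    have cx: "x \<otimes> star x = star x \<otimes> x" using step2[OF x nx] .
    have "(star x \<otimes> y) \<otimes> x = star x \<otimes> ?z" using x y sx xy by (metis m_assoc)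
    also have "\<dots> = ?z \<otimes> star x" by (rule h)
    also have "\<dots> = y \<otimes> (x \<otimes> star x)" using x y sx xy by (metis m_assoc)
    also have "\<dots> = (y \<otimes> star x) \<otimes> x" using x y sx cx by (metis m_assoc)
    finally show ?thesis using x y sx by simp
  qed
qed

end

theorem lemma3p4:
  fixes G :: "'g monoid" and star :: "'g \<Rightarrow> 'g" and \<sigma> :: "'g \<Rightarrow> 'r::comm_ring_1"
  assumes grp: "group G"
    and char: "(2::'r) \<noteq> 0"
    and star_closed: "\<forall>x\<in>carrier G. star x \<in> carrier G"
    and star_mult: "\<forall>x\<in>carrier G. \<forall>y\<in>carrier G. star (x \<otimes>\<^bsub>G\<^esub> y) = star y \<otimes>\<^bsub>G\<^esub> star x"
    and star_star: "\<forall>x\<in>carrier G. star (star x) = x"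
    and sigma_hom: "\<forall>x\<in>carrier G. \<forall>y\<in>carrier G. \<sigma> (x \<otimes>\<^bsub>G\<^esub> y) = \<sigma> x * \<sigma> y"
    and sigma_unit: "\<forall>x\<in>carrier G. \<sigma> x dvd 1"
    and sigma_nontriv: "\<exists>x\<in>carrier G. \<sigma> x \<noteq> 1"
    and compat: "\<forall>x\<in>carrier G. \<sigma> (x \<otimes>\<^bsub>G\<^esub> star x) = 1"
    and anti: "S_anticomm G star \<sigma>"
  shows "(\<forall>x\<in>carrier G. \<forall>y\<in>carrier G.
            (x \<otimes>\<^bsub>G\<^esub> y = y \<otimes>\<^bsub>G\<^esub> x \<longleftrightarrow> star x \<otimes>\<^bsub>G\<^esub> y = y \<otimes>\<^bsub>G\<^esub> star x))
       \<and> (\<forall>x\<in>carrier G. \<forall>y\<in>carrier G.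
            star x \<noteq> x \<longrightarrow> star y \<noteq> y \<longrightarrow> x \<otimes>\<^bsub>G\<^esub> y = y \<otimes>\<^bsub>G\<^esub> x \<longrightarrow>
              (x \<otimes>\<^bsub>G\<^esub> y = y \<otimes>\<^bsub>G\<^esub> x
               \<and> y \<otimes>\<^bsub>G\<^esub> x = star x \<otimes>\<^bsub>G\<^esub> star y
               \<and> star x \<otimes>\<^bsub>G\<^esub> star y = star y \<otimes>\<^bsub>G\<^esub> star x
               \<and> x \<otimes>\<^bsub>G\<^esub> star y = star y \<otimes>\<^bsub>G\<^esub> x
               \<and> star y \<otimes>\<^bsub>G\<^esub> x = star x \<otimes>\<^bsub>G\<^esub> y
               \<and> star x \<otimes>\<^bsub>G\<^esub> y = y \<otimes>\<^bsub>G\<^esub> star x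
               \<and> 2 * (1 + \<sigma> (x \<otimes>\<^bsub>G\<^esub> y)) = 0
               \<and> 2 * (\<sigma> x + \<sigma> y) = 0))"
proof -
  interpret L G star \<sigma>
    apply (rule L.intro[OF grp])
    apply (unfold_locales)
    using char star_closed star_mult star_star sigma_unit anti by auto
  have P1: "\<forall>x\<in>carrier G. \<forall>y\<in>carrier G.
            (x \<otimes>\<^bsub>G\<^esub> y = y \<otimes>\<^bsub>G\<^esub> x \<longleftrightarrow> star x \<otimes>\<^bsub>G\<^esub> y = y \<otimes>\<^bsub>G\<^esub> star x)"
  proof (intro ballI iffI)
    fix x y assume x: "x \<in> carrier G" and y: "y \<in> carrier G"
    { assume "x \<otimes>\<^bsub>G\<^esub> y = y \<otimes>\<^bsub>G\<^esub> x" then show "star x \<otimes>\<^bsub>G\<^esub> y = y \<otimes>\<^bsub>G\<^esub> star x" using fwd x y by blast }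
    { assume h: "star x \<otimes>\<^bsub>G\<^esub> y = y \<otimes>\<^bsub>G\<^esub> star x"
      have sx: "star x \<in> carrier G" using star_closed x by blast
      from fwd[OF sx y h] show "x \<otimes>\<^bsub>G\<^esub> y = y \<otimes>\<^bsub>G\<^esub> x"
        using star_star x by simp }
  qed
  show ?thesis
  proof (rule conjI[OF P1], intro ballI impI)
    fix x y assume x: "x \<in> carrier G" and y: "y \<in> carrier G"
      and nx: "star x \<noteq> x" and ny: "star y \<noteq> y" and xy: "x \<otimes>\<^bsub>G\<^esub> y = y \<otimes>\<^bsub>G\<^esub> x"
    show "x \<otimes>\<^bsub>G\<^esub> y = y \<otimes>\<^bsub>G\<^esub> x
               \<and> y \<otimes>\<^bsub>G\<^esub> x = star x \<otimes>\<^bsub>G\<^esub> star y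
               \<and> star x \<otimes>\<^bsub>G\<^esub> star y = star y \<otimes>\<^bsub>G\<^esub> star x
               \<and> x \<otimes>\<^bsub>G\<^esub> star y = star y \<otimes>\<^bsub>G\<^esub> x
               \<and> star y \<otimes>\<^bsub>G\<^esub> x = star x \<otimes>\<^bsub>G\<^esub> y
               \<and> star x \<otimes>\<^bsub>G\<^esub> y = y \<otimes>\<^bsub>G\<^esub> star x
               \<and> 2 * (1 + \<sigma> (x \<otimes>\<^bsub>G\<^esub> y)) = 0
               \<and> 2 * (\<sigma> x + \<sigma> y) = 0"
    proof -
      have hs: "\<sigma> (x \<otimes>\<^bsub>G\<^esub> y) = \<sigma> x * \<sigma> y" using sigma_hom x y by blast
      show ?thesis using step3[OF x y nx ny xy] xy unfolding hs by simp
    qed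
  qed
qed

end
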